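(* In the setting described in the context, assume that $D^pf$ is Lipschitz continuous (with respect to $\|\cdot\|_2$ on tensors), that $x_k\to x_*\in\mathbb{R}^n$ and $W_k\to W_*$ for some nonsingular $W_*\in\mathbb{R}^{n\times n}$, with $\sum_{k\ge0}\|x_k-x_*\|_2<\infty$ and $\sum_{k\ge0}\|W_k-W_*\|_2<\infty$. Then $\lim_{k\to\infty}\frac{\|(\mathcal{C}_k-D^pf(x_* ))[s_k]\|_F}{\|s_k\|_2}=0$.
   Context: Setting (higher-order secant update): $p\ge 2$; $f:\mathbb{R}^n\to\mathbb{R}$ is $p$ times continuously differentiable, $D^pf(x)$ denoting its $p$th derivative viewed as a symmetric multilinear map; $(x_k)_{k\ge0}$ is a sequence in $\mathbb{R}^n$ with steps $s_k = x_{k+1}-x_k \ne 0$; $(W_k)_{k\ge0}$ are nonsingular $n\times n$ matrices; $\widetilde{\mathcal{C}}_k = \int_0^1 D^pf(x_k+ts_k)\,dt$; $\mathcal{C}_0\in\mathbb{R}^{\otimes^p n}_{\mathrm{sym}}$ is arbitrary and $\mathcal{C}_{k+1}$ is the unique minimizer of $\|(\mathcal{C}-\mathcal{C}_k)[W_k]^p\|_F$ over $\mathcal{C}\in\mathbb{R}^{\otimes^p n}_{\mathrm{sym}}$ subject to $\mathcal{C}[s_k]=\widetilde{\mathcal{C}}_k[s_k]$. Notation: a $p$-tensor is a multilinear map $(\mathbb{R}^n)^p\to\mathbb{R}$; $\mathcal{T}[s]$ fixes the first argument to $s$ (a $(p-1)$-tensor); $(\mathcal{T}[M]^p)[s_1,\dots,s_p]=\mathcal{T}[Ms_1,\dots,Ms_p]$;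 symmetric means invariant under permutation of arguments; $\|\cdot\|_F$ is the Frobenius norm of the array of entries; $\|\mathcal{T}\|_2=\max_{\|u_i\|_2=1}|\mathcal{T}[u_1,\dots,u_p]|$; on matrices $\|\cdot\|_2$ is the spectral norm. *)

theory Defs
  imports "HOL-Analysis.Analysis"
begin

text \<open>Tensors over R^n (n = CARD('n)) are represented as functions from index lists to reals;
  a p-tensor is one whose entries vanish off lists of length p. Entry at [i1,...,ip] is
  T[e_i1,...,e_ip].\<close>

type_synonym 'n tensor = "'n list \<Rightarrow> real"

definition is_tensor :: "nat \<Rightarrow> 'n tensor \<Rightarrow> bool" where
  "is_tensor p T \<longleftrightarrow> (\<forall>is. length is \<noteq> p \<longrightarrow> T is = 0)"

definition sym_tensor :: "nat \<Rightarrow> 'n tensor \<Rightarrow> bool" where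
  "sym_tensor p T \<longleftrightarrow> is_tensor p T \<and>
     (\<forall>is js. length is = p \<longrightarrow> mset is = mset js \<longrightarrow> T is = T js)"

definition tapply :: "'n::finite tensor \<Rightarrow> real^'n \<Rightarrow> 'n tensor" where
  "tapply T s = (\<lambda>is. \<Sum>j\<in>UNIV. s $ j * T (j # is))"

text \<open>(T[M]^p)[s1,...,sp] = T[M s1,...,M sp].\<close>
definition ttransform :: "nat \<Rightarrow> 'n::finite tensor \<Rightarrow> real^'n^'n \<Rightarrow> 'n tensor" where
  "ttransform p T M = (\<lambda>is. if length is = p then
      (\<Sum>js\<in>{js. length js = p}. T js * (\<Prod>k<p. M $ (js ! k) $ (is ! k))) else 0)"

definition frob :: "nat \<Rightarrow> 'n::finite tensor \<Rightarrow> real" where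
  "frob q T = sqrt (\<Sum>is\<in>{is. length is = q}. (T is)\<^sup>2)"

definition teval :: "nat \<Rightarrow> 'n::finite tensor \<Rightarrow> (nat \<Rightarrow> real^'n) \<Rightarrow> real" where
  "teval p T u = (\<Sum>js\<in>{js. length js = p}. T js * (\<Prod>k<p. u k $ (js ! k)))"

definition tnorm2 :: "nat \<Rightarrow> 'n::finite tensor \<Rightarrow> real" where
  "tnorm2 p T = (SUP u\<in>{u. \<forall>k<p. norm (u k) = 1}. \<bar>teval p T u\<bar>)"

fun pd :: "'n::finite list \<Rightarrow> (real^'n \<Rightarrow> real) \<Rightarrow> real^'n \<Rightarrow> real" where
  "pd [] f = f"
| "pd (i # is) f = (\<lambda>x. frechet_derivative (pd is f) (at x) (axis i 1))"

definition Cp :: "nat \<Rightarrow> (real^'n::finite \<Rightarrow> real) \<Rightarrow> bool" where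
  "Cp p f \<longleftrightarrow> (\<forall>is. length is < p \<longrightarrow> (\<forall>x. pd is f differentiable (at x)))
             \<and> (\<forall>is. length is \<le> p \<longrightarrow> continuous_on UNIV (pd is f))"

definition Dp :: "nat \<Rightarrow> (real^'n::finite \<Rightarrow> real) \<Rightarrow> real^'n \<Rightarrow> 'n tensor" where
  "Dp p f x = (\<lambda>is. if length is = p then pd is f x else 0)"

definition Cavg :: "nat \<Rightarrow> (real^'n::finite \<Rightarrow> real) \<Rightarrow> real^'n \<Rightarrow> real^'n \<Rightarrow> 'n tensor" where
  "Cavg p f x s = (\<lambda>is. integral {0..1} (\<lambda>t. Dp p f (x + t *\<^sub>R s) is))"

end

theory Submission
  imports Defs
begin


lemma finite_LL: "finite {is::'n::finite list. length is = q}"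
  using finite_lists_length_eq[of "UNIV::'n set" q] by simp

lemma frob_L2: "frob q T = L2_set T {is. length is = q}"
  unfolding frob_def L2_set_def by simp

lemma frob_nonneg: "0 \<le> frob q T" by (simp add: frob_def sum_nonneg)

lemma frob_triangle: "frob q (\<lambda>is. T is + S is) \<le> frob q T + frob q S"
  unfolding frob_L2 by (rule L2_set_triangle_ineq)

lemma frob_abs: "frob q (\<lambda>is. \<bar>T is\<bar>) = frob q T" by (simp add: frob_def)
lemma frob_uminus: "frob q (\<lambda>is. - T is) = frob q T" by (simp add: frob_def)

lemma frob_entry: "length is = q \<Longrightarrow> \<bar>T is\<bar> \<le> frob q (T::'n::finite list \<Rightarrow> real)"
  using member_le_L2_set[OF finite_LL, of "is" q "\<lambda>is. \<bar>T is\<bar>"]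
  by (simp add: frob_L2[symmetric] frob_abs)

lemma frob_const_bound:
  assumes "\<And>is. length is = q \<Longrightarrow> \<bar>T is\<bar> \<le> B" "0 \<le> B"
  shows "frob q (T::'n::finite list \<Rightarrow> real) \<le> sqrt (card {is::'n list. length is = q}) * B"
proof -
  have "frob q T = L2_set (\<lambda>is. \<bar>T is\<bar>) {is. length is = q}"
    by (simp add: frob_L2[symmetric] frob_abs)
  also have "\<dots> \<le> L2_set (\<lambda>is. B) {is::'n list. length is = q}"
    by (rule L2_set_mono) (auto simp: assms)
  also have "\<dots> = sqrt (card {is::'n list. length is = q}) * B"
    using L2_set_constant[of B "{is::'n list. length is = q}"] assms(2) by simp
  finally show ?thesis .
qed

lemma sum_abs_le_frob:
  fixes T :: "'n::finite list \<Rightarrow> real"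
  shows "(\<Sum>is\<in>{is. length is = q}. \<bar>T is\<bar>) \<le> sqrt (card {is::'n list. length is = q}) * frob q T"
  using L2_set_mult_ineq[of T "\<lambda>_. 1::real" "{is::'n list. length is = q}"]
  by (simp add: frob_L2 L2_set_constant mult.commute)

lemma frob_coef_bound:
  fixes T X :: "'n::finite list \<Rightarrow> real"
  assumes X: "\<And>is. length is = p \<Longrightarrow> X is = (\<Sum>js\<in>{js. length js = p}. T js * K is js)"
    and K: "\<And>is js. length is = p \<Longrightarrow> length js = p \<Longrightarrow> \<bar>K is js\<bar> \<le> \<kappa>"
    and k0: "0 \<le> \<kappa>"
  shows "frob p X \<le> real (card {is::'n list. length is = p}) * \<kappa> * frob p T"
proof -
  let ?N = "card {is::'n list. length is = p}"
  have "\<bar>X is\<bar> \<le> \<kappa> * (sqrt ?N * frob p T)" if "length is = p" for "is"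
  proof -
    have "\<bar>X is\<bar> \<le> (\<Sum>js\<in>{js. length js = p}. \<bar>T js * K is js\<bar>)"
      unfolding X[OF that] by (rule sum_abs)
    also have "\<dots> \<le> (\<Sum>js\<in>{js. length js = p}. \<bar>T js\<bar> * \<kappa>)"
      by (rule sum_mono) (auto simp: abs_mult that K intro!: mult_left_mono)
    also have "\<dots> = \<kappa> * (\<Sum>js\<in>{js. length js = p}. \<bar>T js\<bar>)"
      by (simp add: sum_distrib_left mult.commute)
    also have "\<dots> \<le> \<kappa> * (sqrt ?N * frob p T)"
      by (rule mult_left_mono[OF sum_abs_le_frob k0])
    finally show ?thesis .
  qed
  then have "frob p X \<le> sqrt ?N * (\<kappa> * (sqrt ?N * frob p T))"
    by (intro frob_const_bound) (auto simp: frob_nonneg k0)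
  also have "\<dots> = ?N * \<kappa> * frob p T"
    by (simp add: algebra_simps)
  finally show ?thesis .
qed

lemma prod_abs_bound:
  fixes a :: "nat \<Rightarrow> real"
  assumes "\<And>k. k < p \<Longrightarrow> \<bar>a k\<bar> \<le> \<mu>" "1 \<le> \<mu>"
  shows "\<bar>\<Prod>k<p. a k\<bar> \<le> \<mu> ^ p"
  using assms
proof (induction p)
  case 0 then show ?case by simp
next
  case (Suc p)
  have "\<bar>\<Prod>k<Suc p. a k\<bar> = \<bar>\<Prod>k<p. a k\<bar> * \<bar>a p\<bar>" by (simp add: abs_mult)
  also have "\<dots> \<le> \<mu>^p * \<mu>"
    using Suc by (intro mult_mono) auto
  finally show ?case by (simp add: mult.commute)
qed

lemma prod_diff_bound:
  fixes a b :: "nat \<Rightarrow> real"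
  assumes "\<And>k. k < p \<Longrightarrow> \<bar>a k\<bar> \<le> \<mu>" "\<And>k. k < p \<Longrightarrow> \<bar>b k\<bar> \<le> \<mu>"
    "\<And>k. k < p \<Longrightarrow> \<bar>a k - b k\<bar> \<le> \<epsilon>" "1 \<le> \<mu>"
  shows "\<bar>(\<Prod>k<p. a k) - (\<Prod>k<p. b k)\<bar> \<le> real p * \<mu> ^ p * \<epsilon>"
  using assms
proof (induction p)
  case 0 then show ?case by simp
next
  case (Suc p)
  have e0: "0 \<le> \<epsilon>" using Suc.prems(3)[of 0] by simp
  have IH: "\<bar>(\<Prod>k<p. a k) - (\<Prod>k<p. b k)\<bar> \<le> real p * \<mu> ^ p * \<epsilon>"
    using Suc by auto
  have pb: "\<bar>\<Prod>k<p. b k\<bar> \<le> \<mu> ^ p" using Suc.prems by (intro prod_abs_bound) auto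
  have "(\<Prod>k<Suc p. a k) - (\<Prod>k<Suc p. b k)
      = ((\<Prod>k<p. a k) - (\<Prod>k<p. b k)) * a p + (\<Prod>k<p. b k) * (a p - b p)"
    by (simp add: algebra_simps)
  then have "\<bar>(\<Prod>k<Suc p. a k) - (\<Prod>k<Suc p. b k)\<bar>
      \<le> \<bar>(\<Prod>k<p. a k) - (\<Prod>k<p. b k)\<bar> * \<bar>a p\<bar> + \<bar>\<Prod>k<p. b k\<bar> * \<bar>a p - b p\<bar>"
    by (metis abs_mult abs_triangle_ineq)
  also have "\<dots> \<le> (real p * \<mu> ^ p * \<epsilon>) * \<mu> + \<mu>^p * \<epsilon>"
    using Suc.prems IH pb by (intro add_mono mult_mono) auto
  also have "\<dots> \<le> (real p * \<mu> ^ Suc p * \<epsilon>) + \<mu>^Suc p * \<epsilon>"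
  proof -
    have "\<mu>^p \<le> \<mu>^Suc p" using Suc.prems(4) by (simp add: power_increasing)
    then have "\<mu>^p * \<epsilon> \<le> \<mu>^Suc p * \<epsilon>" using e0 by (rule mult_right_mono)
    moreover have "(real p * \<mu> ^ p * \<epsilon>) * \<mu> = real p * \<mu> ^ Suc p * \<epsilon>" by (simp add: algebra_simps)
    ultimately show ?thesis by linarith
  qed
  finally show ?case by (simp add: algebra_simps)
qed

lemma sum_LL_Suc:
  "(\<Sum>ls\<in>{ls::'n::finite list. length ls = Suc q}. h ls) = (\<Sum>j\<in>UNIV. \<Sum>ls\<in>{ls. length ls = q}. h (j # ls))"
proof -
  have e: "{ls::'n list. length ls = Suc q} = (\<lambda>(j,ls). j # ls) ` (UNIV \<times> {ls. length ls = q})"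
    by (auto simp: length_Suc_conv image_iff)
  have i: "inj_on (\<lambda>(j,ls). j # ls) (UNIV \<times> {ls::'n list. length ls = q})" by (auto simp: inj_on_def)
  show ?thesis unfolding e by (subst sum.reindex[OF i]) (simp add: sum.cartesian_product split_def)
qed

lemma sum_LL_prod:
  fixes g :: "nat \<Rightarrow> 'n::finite \<Rightarrow> real"
  shows "(\<Sum>ls\<in>{ls::'n::finite list. length ls = p}. \<Prod>k<p. g k (ls!k)) = (\<Prod>k<p. \<Sum>l\<in>UNIV. g k l)"
proof (induction p arbitrary: g)
  case 0 then show ?case by simp
next
  case (Suc p)
  have "(\<Sum>ls\<in>{ls::'n list. length ls = Suc p}. \<Prod>k<Suc p. g k (ls!k))
      = (\<Sum>j\<in>UNIV. \<Sum>ls\<in>{ls::'n list. length ls = p}. g 0 j * (\<Prod>k<p. g (Suc k) (ls!k)))"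
    by (simp only: sum_LL_Suc prod.lessThan_Suc_shift) simp
  also have "\<dots> = (\<Sum>j\<in>UNIV. g 0 j) * (\<Prod>k<p. \<Sum>l\<in>UNIV. g (Suc k) l)"
  proof -
    have IH: "(\<Sum>ls\<in>{ls::'n list. length ls = p}. \<Prod>k<p. g (Suc k) (ls!k)) = (\<Prod>k<p. \<Sum>l\<in>UNIV. g (Suc k) l)"
      by (rule Suc.IH)
    have "(\<Sum>j\<in>UNIV. \<Sum>ls\<in>{ls::'n list. length ls = p}. g 0 j * (\<Prod>k<p. g (Suc k) (ls!k)))
       = (\<Sum>j\<in>UNIV. g 0 j * (\<Sum>ls\<in>{ls::'n list. length ls = p}. \<Prod>k<p. g (Suc k) (ls!k)))"
      by (rule sum.cong[OF refl], rule sum_distrib_left[symmetric])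
    also have "\<dots> = (\<Sum>j\<in>UNIV. g 0 j * (\<Prod>k<p. \<Sum>l\<in>UNIV. g (Suc k) l))" by (simp only: IH)
    also have "\<dots> = (\<Sum>j\<in>UNIV. g 0 j) * (\<Prod>k<p. \<Sum>l\<in>UNIV. g (Suc k) l)" by (simp add: sum_distrib_right)
    finally show ?thesis .
  qed
  also have "\<dots> = (\<Prod>k<Suc p. \<Sum>l\<in>UNIV. g k l)"
    by (simp only: prod.lessThan_Suc_shift)
  finally show ?case .
qed

lemma prod_ind:
  assumes "length is = p" "length js = p"
  shows "(\<Prod>k<p. (if js!k = is!k then 1 else 0::real)) = (if js = is then 1 else 0)"
proof (cases "js = is")
  case True then show ?thesis by simp
next
  case False
  then obtain k where k: "k < p" "js!k \<noteq> is!k" using assms nth_equalityI by metis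
  have "(\<Prod>k<p. (if js!k = is!k then 1 else 0::real)) = 0"
    using k by (intro prod_zero) auto
  then show ?thesis using False by simp
qed

lemma ttransform_id:
  assumes "length is = p"
  shows "ttransform p T (mat 1) is = T is"
proof -
  have "ttransform p T (mat 1) is = (\<Sum>js\<in>{js. length js = p}. T js * (if js = is then 1 else 0))"
    unfolding ttransform_def using assms
    by (auto simp: mat_def prod_ind intro!: sum.cong)
  also have "\<dots> = T is" using assms by (simp add: if_distrib finite_LL cong: if_cong)
  finally show ?thesis .
qed

lemma ttransform_comp:
  fixes T :: "'n::finite list \<Rightarrow> real"
  assumes "length is = p"
  shows "ttransform p (ttransform p T A) B is = ttransform p T (A ** B) is"
proof -
  have "ttransform p (ttransform p T A) B is
     = (\<Sum>ls\<in>{ls. length ls = p}. (\<Sum>js\<in>{js. length js = p}. T js * (\<Prod>k<p. A $ (js ! k) $ (ls ! k))) * (\<Prod>k<p. B $ (ls ! k) $ (is ! k)))"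
    unfolding ttransform_def using assms by (auto intro!: sum.cong)
  also have "\<dots> = (\<Sum>js\<in>{js. length js = p}. T js * (\<Sum>ls\<in>{ls::'n list. length ls = p}. \<Prod>k<p. A $ (js ! k) $ (ls ! k) * B $ (ls ! k) $ (is ! k)))"
  proof -
    have "(\<Sum>ls\<in>{ls. length ls = p}. (\<Sum>js\<in>{js. length js = p}. T js * (\<Prod>k<p. A $ (js ! k) $ (ls ! k))) * (\<Prod>k<p. B $ (ls ! k) $ (is ! k)))
      = (\<Sum>ls\<in>{ls::'n list. length ls = p}. \<Sum>js\<in>{js. length js = p}. T js * ((\<Prod>k<p. A $ (js ! k) $ (ls ! k)) * (\<Prod>k<p. B $ (ls ! k) $ (is ! k))))"
      by (simp add: sum_distrib_right mult.assoc)
    also have "\<dots> = (\<Sum>js\<in>{js. length js = p}. \<Sum>ls\<in>{ls::'n list. length ls = p}. T js * ((\<Prod>k<p. A $ (js ! k) $ (ls ! k)) * (\<Prod>k<p. B $ (ls ! k) $ (is ! k))))"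
      by (rule sum.swap)
    also have "\<dots> = (\<Sum>js\<in>{js. length js = p}. T js * (\<Sum>ls\<in>{ls::'n list. length ls = p}. \<Prod>k<p. A $ (js ! k) $ (ls ! k) * B $ (ls ! k) $ (is ! k)))"
      by (simp add: sum_distrib_left prod.distrib)
    finally show ?thesis .
  qed
  also have "\<dots> = (\<Sum>js\<in>{js. length js = p}. T js * (\<Prod>k<p. (A ** B) $ (js ! k) $ (is ! k)))"
  proof -
    have "(\<Sum>ls\<in>{ls::'n list. length ls = p}. \<Prod>k<p. A $ (js ! k) $ (ls ! k) * B $ (ls ! k) $ (is ! k))
       = (\<Prod>k<p. (A ** B) $ (js ! k) $ (is ! k))" for js
      using sum_LL_prod[where p=p and g="\<lambda>k l. A $ (js ! k) $ l * B $ l $ (is ! k)"]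
      by (simp add: matrix_matrix_mult_def)
    then show ?thesis by simp
  qed
  also have "\<dots> = ttransform p T (A ** B) is" unfolding ttransform_def using assms by simp
  finally show ?thesis .
qed

lemma frob_tapply: "frob q (tapply T s) \<le> norm s * frob (Suc q) (T::'n::finite list \<Rightarrow> real)"
proof -
  have "(\<Sum>is\<in>{is::'n list. length is = q}. (tapply T s is)\<^sup>2)
      \<le> (\<Sum>is\<in>{is::'n list. length is = q}. (norm s)\<^sup>2 * (\<Sum>j\<in>UNIV. (T (j#is))\<^sup>2))"
  proof (rule sum_mono)
    fix "is"
    have "(tapply T s is)\<^sup>2 \<le> (\<Sum>j\<in>UNIV. (s$j)\<^sup>2) * (\<Sum>j\<in>UNIV. (T (j#is))\<^sup>2)"
      unfolding tapply_def by (rule Cauchy_Schwarz_ineq_sum)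
    moreover have "(\<Sum>j\<in>UNIV. (s$j)\<^sup>2) = (norm s)\<^sup>2"
      by (simp add: norm_vec_def L2_set_def sum_nonneg)
    ultimately show "(tapply T s is)\<^sup>2 \<le> (norm s)\<^sup>2 * (\<Sum>j\<in>UNIV. (T (j#is))\<^sup>2)" by simp
  qed
  also have "\<dots> = (norm s)\<^sup>2 * (\<Sum>is\<in>{is::'n list. length is = q}. \<Sum>j\<in>UNIV. (T (j#is))\<^sup>2)"
    by (simp add: sum_distrib_left)
  also have "\<dots> = (norm s)\<^sup>2 * (\<Sum>j\<in>UNIV. \<Sum>is\<in>{is::'n list. length is = q}. (T (j#is))\<^sup>2)"
    by (subst sum.swap) simp
  also have "\<dots> = (norm s)\<^sup>2 * (\<Sum>ls\<in>{ls::'n list. length ls = Suc q}. (T ls)\<^sup>2)"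
    by (simp add: sum_LL_Suc)
  finally have "sqrt (\<Sum>is\<in>{is::'n list. length is = q}. (tapply T s is)\<^sup>2)
      \<le> sqrt ((norm s)\<^sup>2 * (\<Sum>ls\<in>{ls::'n list. length ls = Suc q}. (T ls)\<^sup>2))"
    by (rule real_sqrt_le_mono)
  then show ?thesis unfolding frob_def by (simp add: real_sqrt_mult)
qed



definition wn :: "nat \<Rightarrow> real^'n^'n \<Rightarrow> ('n::finite list \<Rightarrow> real) \<Rightarrow> real" where
  "wn p A T = frob p (ttransform p T A)"

lemma frob_cong: "(\<And>is. length is = q \<Longrightarrow> X is = Y is) \<Longrightarrow> frob q X = frob q Y"
  unfolding frob_def by (auto intro!: arg_cong[where f=sqrt] sum.cong)

lemma frob_diff_tri: "frob q (\<lambda>is. T is - S is) \<le> frob q (\<lambda>is. T is - R is) + frob q (\<lambda>is. R is - S is)"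
  using frob_triangle[of q "\<lambda>is. T is - R is" "\<lambda>is. R is - S is"] by simp

lemma frob_rev_tri: "\<bar>frob q T - frob q S\<bar> \<le> frob q (\<lambda>is. T is - S is)"
proof -
  have "frob q T \<le> frob q (\<lambda>is. T is - S is) + frob q S"
    using frob_triangle[of q "\<lambda>is. T is - S is" S] by simp
  moreover have "frob q S \<le> frob q (\<lambda>is. T is - S is) + frob q T"
    using frob_triangle[of q "\<lambda>is. - (T is - S is)" T] frob_uminus[of q "\<lambda>is. T is - S is"] by simp
  ultimately show ?thesis by linarith
qed

lemma tapply_lin: "tapply (\<lambda>is. a * T is + b * S is) s = (\<lambda>is. a * tapply T s is + b * tapply S s is)"
  unfolding tapply_def by (auto simp: sum.distrib sum_distrib_left algebra_simps)

lemma tapply_diff: "tapply (T - S) s = tapply T s - tapply S s"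
  unfolding tapply_def fun_diff_def by (auto simp: sum_subtractf algebra_simps)

lemma ttransform_lin: "ttransform p (\<lambda>is. a * T is + b * S is) A = (\<lambda>is. a * ttransform p T A is + b * ttransform p S A is)"
  unfolding ttransform_def by (auto simp: sum.distrib sum_distrib_left algebra_simps)

lemma ttransform_diff: "ttransform p (T - S) A = ttransform p T A - ttransform p S A"
  unfolding ttransform_def fun_diff_def by (auto simp: sum_subtractf algebra_simps)

lemma sym_tensor_lin: "sym_tensor p T \<Longrightarrow> sym_tensor p S \<Longrightarrow> sym_tensor p (\<lambda>is. a * T is + b * S is)"
  unfolding sym_tensor_def is_tensor_def by auto

lemma wn_nonneg: "0 \<le> wn p A T" unfolding wn_def by (rule frob_nonneg)

lemma wn_tri: "wn p A (T - S) \<le> wn p A (T - R) + wn p A (R - S)"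
  unfolding wn_def ttransform_diff unfolding fun_diff_def by (rule frob_diff_tri)

lemma wn_swap: "wn p A (T - S) = wn p A (S - T)"
proof -
  have "wn p A (S - T) = frob p (\<lambda>is. - (ttransform p T A is - ttransform p S A is))"
    unfolding wn_def ttransform_diff unfolding fun_diff_def by simp
  then show ?thesis unfolding wn_def ttransform_diff unfolding fun_diff_def using frob_uminus by metis
qed

lemma wn_upper:
  fixes T :: "'n::finite list \<Rightarrow> real"
  assumes "\<And>i j. \<bar>A $ i $ j\<bar> \<le> \<mu>" "1 \<le> \<mu>"
  shows "wn p A T \<le> real (card {is::'n::finite list. length is = p}) * \<mu>^p * frob p T"
proof -
  have a: "\<And>is. length is = p \<Longrightarrow> ttransform p T A is = (\<Sum>js\<in>{js. length js = p}. T js * (\<Prod>k<p. A $ (js ! k) $ (is ! k)))"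
    unfolding ttransform_def by simp
  have b: "\<And>is js. length is = p \<Longrightarrow> length js = p \<Longrightarrow> \<bar>\<Prod>k<p. A $ (js ! k) $ (is ! k)\<bar> \<le> \<mu>^p"
    using assms by (intro prod_abs_bound) auto
  have c: "0 \<le> \<mu>^p" using assms by simp
  show ?thesis unfolding wn_def by (rule frob_coef_bound[OF a b c])
qed

lemma wn_diff:
  fixes T :: "'n::finite list \<Rightarrow> real"
  assumes "\<And>i j. \<bar>A $ i $ j\<bar> \<le> \<mu>" "\<And>i j. \<bar>B $ i $ j\<bar> \<le> \<mu>" "1 \<le> \<mu>"
    "\<And>i j. \<bar>A $ i $ j - B $ i $ j\<bar> \<le> \<epsilon>"
  shows "\<bar>wn p A T - wn p B T\<bar> \<le> real (card {is::'n::finite list. length is = p}) * (real p * \<mu>^p * \<epsilon>) * frob p T"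
proof -
  have e0: "0 \<le> \<epsilon>" using assms(4) order_trans abs_ge_zero by blast
  have "\<bar>wn p A T - wn p B T\<bar> \<le> frob p (\<lambda>is. ttransform p T A is - ttransform p T B is)"
    unfolding wn_def by (rule frob_rev_tri)
  also have "\<dots> \<le> real (card {is::'n::finite list. length is = p}) * (real p * \<mu>^p * \<epsilon>) * frob p T"
  proof (rule frob_coef_bound[where K="\<lambda>is js. (\<Prod>k<p. A $ (js ! k) $ (is ! k)) - (\<Prod>k<p. B $ (js ! k) $ (is ! k))"])
    show "\<And>is. length is = p \<Longrightarrow> ttransform p T A is - ttransform p T B is = (\<Sum>js\<in>{js. length js = p}. T js * ((\<Prod>k<p. A $ (js ! k) $ (is ! k)) - (\<Prod>k<p. B $ (js ! k) $ (is ! k))))"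
      unfolding ttransform_def by (simp add: sum_subtractf algebra_simps)
    show "\<And>is js. length is = p \<Longrightarrow> length js = p \<Longrightarrow> \<bar>(\<Prod>k<p. A $ (js ! k) $ (is ! k)) - (\<Prod>k<p. B $ (js ! k) $ (is ! k))\<bar> \<le> real p * \<mu>^p * \<epsilon>"
      using assms by (intro prod_diff_bound) auto
    show "0 \<le> real p * \<mu>^p * \<epsilon>" using assms e0 by simp
  qed
  finally show ?thesis .
qed

lemma frob_le_wn:
  fixes A :: "real^'n::finite^'n"
  assumes "invertible A"
  shows "\<exists>K>0. \<forall>T. frob p T \<le> K * wn p A T"
proof -
  obtain B :: "real^'n^'n" where B: "A ** B = mat 1"
    using iffD1[OF invertible_right_inverse[of A] assms] by (elim exE)
  define \<mu> where "\<mu> = 1 + (\<Sum>i\<in>UNIV. \<Sum>j\<in>UNIV. \<bar>B $ i $ j\<bar>)"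
  have "0 \<le> (\<Sum>i\<in>UNIV. \<Sum>j\<in>UNIV. \<bar>B $ i $ j\<bar>)" by (intro sum_nonneg) auto
  then have mu1: "1 \<le> \<mu>" unfolding \<mu>_def by linarith
  have muB: "\<bar>B $ i $ j\<bar> \<le> \<mu>" for i j
  proof -
    have "\<bar>B $ i $ j\<bar> \<le> (\<Sum>j\<in>UNIV. \<bar>B $ i $ j\<bar>)"
      by (rule member_le_sum[of j UNIV "\<lambda>j. \<bar>B $ i $ j\<bar>"]) simp_all
    also have "\<dots> \<le> (\<Sum>i\<in>UNIV. \<Sum>j\<in>UNIV. \<bar>B $ i $ j\<bar>)"
      by (rule member_le_sum[of i UNIV "\<lambda>i. \<Sum>j\<in>UNIV. \<bar>B $ i $ j\<bar>"]) (auto intro!: sum_nonneg)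
    finally show ?thesis unfolding \<mu>_def by linarith
  qed
  define K where "K = real (card {is::'n list. length is = p}) * \<mu>^p"
  have "frob p T \<le> K * wn p A T" for T
  proof -
    have "frob p T = frob p (ttransform p (ttransform p T A) B)"
    proof (rule frob_cong)
      fix "is" :: "'n list" assume len: "length is = p"
      have "ttransform p (ttransform p T A) B is = ttransform p T (A ** B) is" by (rule ttransform_comp[OF len])
      also have "\<dots> = T is" unfolding B by (rule ttransform_id[OF len])
      finally show "T is = ttransform p (ttransform p T A) B is" by simp
    qed
    also have "\<dots> = wn p B (ttransform p T A)" unfolding wn_def ..
    also have "\<dots> \<le> K * wn p A T" unfolding K_def wn_def[of p A]
      by (rule wn_upper[OF muB mu1])
    finally show ?thesis .
  qed
  moreover have "K > 0"
  proof -
    have "replicate p undefined \<in> {is::'n list. length is = p}" by simp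
    then have ne: "{is::'n list. length is = p} \<noteq> {}" by blast
    have fin: "finite {is::'n list. length is = p}" by (rule finite_LL)
    have "card {is::'n list. length is = p} > 0" using fin ne by (simp add: card_gt_0_iff)
    moreover have "\<mu>^p > 0" using mu1 by simp
    ultimately show ?thesis unfolding K_def by (intro mult_pos_pos) simp_all
  qed
  ultimately show ?thesis by (intro exI[of _ K]) simp
qed

lemma teval_axis:
  assumes "length is = p"
  shows "teval p T (\<lambda>k. axis (is ! k) 1) = T is"
proof -
  have "teval p T (\<lambda>k. axis (is ! k) 1) = (\<Sum>js\<in>{js. length js = p}. T js * (if js = is then 1 else 0))"
    unfolding teval_def using assms
    by (auto simp: axis_def prod_ind intro!: sum.cong)
  also have "\<dots> = T is" using assms by (simp add: if_distrib finite_LL cong: if_cong)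
  finally show ?thesis .
qed

lemma entry_le_tnorm2:
  assumes "length is = p"
  shows "\<bar>T is\<bar> \<le> tnorm2 p T"
proof -
  let ?U = "{u. \<forall>k<p. norm (u k) = (1::real)}"
  have mem: "(\<lambda>k. axis (is ! k) 1) \<in> {u::nat \<Rightarrow> real^'a. \<forall>k<p. norm (u k) = 1}"
    by (simp add: norm_axis_1)
  have bdd: "bdd_above ((\<lambda>u. \<bar>teval p T u\<bar>) ` {u::nat \<Rightarrow> real^'a. \<forall>k<p. norm (u k) = 1})"
  proof (rule bdd_aboveI2)
    fix u :: "nat \<Rightarrow> real^'a" assume u: "u \<in> {u. \<forall>k<p. norm (u k) = 1}"
    have "\<bar>teval p T u\<bar> \<le> (\<Sum>js\<in>{js. length js = p}. \<bar>T js * (\<Prod>k<p. u k $ (js ! k))\<bar>)"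
      unfolding teval_def by (rule sum_abs)
    also have "\<dots> \<le> (\<Sum>js\<in>{js. length js = p}. \<bar>T js\<bar> * 1)"
    proof (rule sum_mono)
      fix js :: "'a list"
      have "\<bar>\<Prod>k<p. u k $ (js ! k)\<bar> \<le> 1^p"
      proof (rule prod_abs_bound)
        fix k assume "k < p"
        then have "norm (u k) = 1" using u by simp
        then show "\<bar>u k $ (js ! k)\<bar> \<le> 1" using component_le_norm_cart[of "u k" "js ! k"] by simp
      qed simp
      then show "\<bar>T js * (\<Prod>k<p. u k $ (js ! k))\<bar> \<le> \<bar>T js\<bar> * 1"
        by (simp add: abs_mult mult_left_le)
    qed
    finally show "\<bar>teval p T u\<bar> \<le> (\<Sum>js\<in>{js. length js = p}. \<bar>T js\<bar> * 1)" .
  qed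
  have "\<bar>T is\<bar> = \<bar>teval p T (\<lambda>k. axis (is ! k) 1)\<bar>" using teval_axis[OF assms] by simp
  also have "\<dots> \<le> tnorm2 p T" unfolding tnorm2_def
    by (rule cSUP_upper[OF mem bdd])
  finally show ?thesis .
qed

lemma quad_nonneg_zero: fixes c q :: real assumes "0 \<le> q" "\<forall>t. 0 \<le> 2 * t * c + t\<^sup>2 * q" shows "c = 0"
proof -
  define t where "t = - c / (q+1)"
  have "0 \<le> 2 * t * c + t\<^sup>2 * q" using assms by blast
  then have "0 \<le> (q+1)^2 * (2 * t * c + t\<^sup>2 * q)" using assms by simp
  also have "(q+1)^2 * (2 * t * c + t\<^sup>2 * q) = -(c\<^sup>2 * (q + 2))"
  proof -
    have tq: "t*(q+1) = -c" unfolding t_def using assms by simp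
    have "(q+1)^2 * (2 * t * c + t\<^sup>2 * q) = 2*c*(t*(q+1))*(q+1) + (t*(q+1))\<^sup>2*q"
      by (simp add: algebra_simps power2_eq_square)
    also have "\<dots> = -(c\<^sup>2 * (q + 2))" unfolding tq by (simp add: algebra_simps power2_eq_square)
    finally show ?thesis .
  qed
  finally have "c\<^sup>2 * (q+2) \<le> 0" by simp
  moreover have "0 < q + 2" using assms by simp
  ultimately have "c\<^sup>2 \<le> 0" by (simp add: mult_le_0_iff)
  then show ?thesis by simp
qed

lemma orth_from_min:
  fixes U V :: "'a \<Rightarrow> real"
  assumes "finite A" "\<And>t. (\<Sum>i\<in>A. (U i)\<^sup>2) \<le> (\<Sum>i\<in>A. (U i + t * V i)\<^sup>2)"
  shows "(\<Sum>i\<in>A. U i * V i) = 0"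
proof (rule quad_nonneg_zero)
  let ?c = "\<Sum>i\<in>A. U i * V i" and ?q = "\<Sum>i\<in>A. (V i)\<^sup>2"
  show "0 \<le> ?q" by (simp add: sum_nonneg)
  have exp: "(\<Sum>i\<in>A. (U i + t * V i)\<^sup>2) = (\<Sum>i\<in>A. (U i)\<^sup>2) + 2 * t * ?c + t\<^sup>2 * ?q" for t
  proof -
    have "(\<Sum>i\<in>A. (U i + t * V i)\<^sup>2) = (\<Sum>i\<in>A. (U i)\<^sup>2 + (2 * t) * (U i * V i) + t\<^sup>2 * (V i)\<^sup>2)"
      by (rule sum.cong) (simp_all add: power2_eq_square algebra_simps)
    also have "\<dots> = (\<Sum>i\<in>A. (U i)\<^sup>2) + (2 * t) * ?c + t\<^sup>2 * ?q"
      by (simp only: sum.distrib sum_distrib_left)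
    finally show ?thesis by simp
  qed
  show "\<forall>t. 0 \<le> 2 * t * ?c + t\<^sup>2 * ?q"
  proof
    fix t :: real
    show "0 \<le> 2 * t * ?c + t\<^sup>2 * ?q" using assms(2)[of t] exp[of t] by linarith
  qed
qed



lemma line_deriv:
  fixes h :: "'a::real_normed_vector \<Rightarrow> real"
  assumes "h differentiable (at (y + t *\<^sub>R v))"
  shows "((\<lambda>t. h (y + t *\<^sub>R v)) has_real_derivative frechet_derivative h (at (y + t *\<^sub>R v)) v) (at t)"
proof -
  let ?D = "frechet_derivative h (at (y + t *\<^sub>R v))"
  have hd: "(h has_derivative ?D) (at (y + t *\<^sub>R v))" using assms frechet_derivative_works by blast
  have ld: "((\<lambda>t. y + t *\<^sub>R v) has_derivative (\<lambda>dt. dt *\<^sub>R v)) (at t)"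
    by (rule derivative_eq_intros refl | simp)+
  have "((\<lambda>t. h (y + t *\<^sub>R v)) has_derivative (\<lambda>dt. ?D (dt *\<^sub>R v))) (at t)"
    using diff_chain_at[OF ld hd] by (simp add: o_def)
  moreover have "(\<lambda>dt. ?D (dt *\<^sub>R v)) = (\<lambda>dt. ?D v * dt)"
  proof
    fix dt :: real
    have "linear ?D" by (rule linear_frechet_derivative[OF assms])
    then show "?D (dt *\<^sub>R v) = ?D v * dt" by (simp add: linear_scale)
  qed
  ultimately show ?thesis unfolding has_field_derivative_def by simp
qed


lemma mvt2d:
  fixes g :: "'a::real_normed_vector \<Rightarrow> real"
  assumes gd: "\<And>y. g differentiable (at y)"
    and gud: "\<And>y. (\<lambda>z. frechet_derivative g (at z) u) differentiable (at y)"
    and st: "0 < s" "0 < t"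
  shows "\<exists>y. norm (y - x) \<le> s * norm u + t * norm v \<and>
    g (x + s *\<^sub>R u + t *\<^sub>R v) - g (x + s *\<^sub>R u) - g (x + t *\<^sub>R v) + g x
     = s * t * frechet_derivative (\<lambda>z. frechet_derivative g (at z) u) (at y) v"
proof -
  define gu where "gu = (\<lambda>z. frechet_derivative g (at z) u)"
  define \<psi> where "\<psi> = (\<lambda>\<sigma>. g ((x + t *\<^sub>R v) + \<sigma> *\<^sub>R u) - g (x + \<sigma> *\<^sub>R u))"
  define \<psi>' where "\<psi>' = (\<lambda>\<sigma>. gu ((x + t *\<^sub>R v) + \<sigma> *\<^sub>R u) - gu (x + \<sigma> *\<^sub>R u))"
  have d1: "(\<psi> has_real_derivative \<psi>' \<sigma>) (at \<sigma>)" if "0 \<le> \<sigma>" "\<sigma> \<le> s" for \<sigma>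
    unfolding \<psi>_def \<psi>'_def gu_def by (intro DERIV_diff line_deriv gd)
  obtain \<sigma> where \<sigma>: "0 < \<sigma>" "\<sigma> < s" "\<psi> s - \<psi> 0 = (s - 0) * \<psi>' \<sigma>"
    using MVT2[OF st(1) d1] by auto
  define ch where "ch = (\<lambda>\<tau>. gu ((x + \<sigma> *\<^sub>R u) + \<tau> *\<^sub>R v))"
  define chd where "chd = (\<lambda>\<tau>. frechet_derivative gu (at ((x + \<sigma> *\<^sub>R u) + \<tau> *\<^sub>R v)) v)"
  have d2: "(ch has_real_derivative chd \<tau>) (at \<tau>)" if "0 \<le> \<tau>" "\<tau> \<le> t" for \<tau>
    unfolding ch_def chd_def by (intro line_deriv) (simp add: gu_def gud)
  obtain \<tau> where \<tau>: "0 < \<tau>" "\<tau> < t" "ch t - ch 0 = (t - 0) * chd \<tau>"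
    using MVT2[OF st(2) d2] by auto
  define y where "y = (x + \<sigma> *\<^sub>R u) + \<tau> *\<^sub>R v"
  have e1: "\<psi>' \<sigma> = ch t - ch 0"
    unfolding \<psi>'_def ch_def by (simp add: algebra_simps)
  have e2: "g (x + s *\<^sub>R u + t *\<^sub>R v) - g (x + s *\<^sub>R u) - g (x + t *\<^sub>R v) + g x = \<psi> s - \<psi> 0"
    unfolding \<psi>_def by (simp add: algebra_simps)
  show ?thesis
  proof (intro exI conjI)
    have "norm (y - x) = norm (\<sigma> *\<^sub>R u + \<tau> *\<^sub>R v)" unfolding y_def by (simp add: algebra_simps)
    also have "\<dots> \<le> norm (\<sigma> *\<^sub>R u) + norm (\<tau> *\<^sub>R v)" by (rule norm_triangle_ineq)
    also have "\<dots> = \<sigma> * norm u + \<tau> * norm v" using \<sigma> \<tau> by simp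
    also have "\<dots> \<le> s * norm u + t * norm v"
      using \<sigma> \<tau> by (intro add_mono mult_right_mono) auto
    finally show "norm (y - x) \<le> s * norm u + t * norm v" .
    show "g (x + s *\<^sub>R u + t *\<^sub>R v) - g (x + s *\<^sub>R u) - g (x + t *\<^sub>R v) + g x
     = s * t * frechet_derivative (\<lambda>z. frechet_derivative g (at z) u) (at y) v"
      unfolding e2 \<sigma>(3) e1 \<tau>(3) using chd_def y_def gu_def by simp
  qed
qed

lemma schwarz:
  fixes g :: "'a::real_normed_vector \<Rightarrow> real"
  assumes gd: "\<And>y. g differentiable (at y)"
    and gud: "\<And>y. (\<lambda>z. frechet_derivative g (at z) u) differentiable (at y)"
    and gvd: "\<And>y. (\<lambda>z. frechet_derivative g (at z) v) differentiable (at y)"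
    and c1: "continuous_on UNIV (\<lambda>y. frechet_derivative (\<lambda>z. frechet_derivative g (at z) u) (at y) v)"
    and c2: "continuous_on UNIV (\<lambda>y. frechet_derivative (\<lambda>z. frechet_derivative g (at z) v) (at y) u)"
  shows "frechet_derivative (\<lambda>z. frechet_derivative g (at z) u) (at x) v
       = frechet_derivative (\<lambda>z. frechet_derivative g (at z) v) (at x) u"
proof -
  define D1 where "D1 = (\<lambda>y. frechet_derivative (\<lambda>z. frechet_derivative g (at z) u) (at y) v)"
  define D2 where "D2 = (\<lambda>y. frechet_derivative (\<lambda>z. frechet_derivative g (at z) v) (at y) u)"
  define e where "e = (\<lambda>n::nat. inverse (real (Suc n)))"
  have e0: "0 < e n" for n unfolding e_def by simp
  have "\<forall>n. \<exists>y. norm (y - x) \<le> e n * norm u + e n * norm v \<and>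
    g (x + e n *\<^sub>R u + e n *\<^sub>R v) - g (x + e n *\<^sub>R u) - g (x + e n *\<^sub>R v) + g x = e n * e n * D1 y"
    unfolding D1_def using mvt2d[OF gd gud e0 e0] by blast
  from choice[OF this] obtain y1 where y1: "\<And>n. norm (y1 n - x) \<le> e n * norm u + e n * norm v \<and>
    g (x + e n *\<^sub>R u + e n *\<^sub>R v) - g (x + e n *\<^sub>R u) - g (x + e n *\<^sub>R v) + g x = e n * e n * D1 (y1 n)"
    by blast
  have "\<forall>n. \<exists>y. norm (y - x) \<le> e n * norm v + e n * norm u \<and>
    g (x + e n *\<^sub>R v + e n *\<^sub>R u) - g (x + e n *\<^sub>R v) - g (x + e n *\<^sub>R u) + g x = e n * e n * D2 y"
    unfolding D2_def using mvt2d[OF gd gvd e0 e0] by blast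
  from choice[OF this] obtain y2 where y2: "\<And>n. norm (y2 n - x) \<le> e n * norm v + e n * norm u \<and>
    g (x + e n *\<^sub>R v + e n *\<^sub>R u) - g (x + e n *\<^sub>R v) - g (x + e n *\<^sub>R u) + g x = e n * e n * D2 (y2 n)"
    by blast
  have eq: "D1 (y1 n) = D2 (y2 n)" for n
  proof -
    have "x + e n *\<^sub>R u + e n *\<^sub>R v = x + e n *\<^sub>R v + e n *\<^sub>R u" by (simp add: algebra_simps)
    then have "e n * e n * D1 (y1 n) = e n * e n * D2 (y2 n)" using y1[of n] y2[of n] by (simp add: algebra_simps)
    then show ?thesis using e0[of n] by simp
  qed
  have elim: "(\<lambda>n. e n * c) \<longlonglongrightarrow> 0" for c
    unfolding e_def by (intro tendsto_mult_left_zero LIMSEQ_inverse_real_of_nat)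
  have y1l: "y1 \<longlonglongrightarrow> x"
  proof -
    have "(\<lambda>n. y1 n - x) \<longlonglongrightarrow> 0"
      by (rule Lim_null_comparison[OF _ elim[of "norm u + norm v"]]) (use y1 in \<open>simp add: algebra_simps\<close>)
    then show ?thesis using Lim_null by blast
  qed
  have y2l: "y2 \<longlonglongrightarrow> x"
  proof -
    have "(\<lambda>n. y2 n - x) \<longlonglongrightarrow> 0"
      by (rule Lim_null_comparison[OF _ elim[of "norm v + norm u"]]) (use y2 in \<open>simp add: algebra_simps\<close>)
    then show ?thesis using Lim_null by blast
  qed
  have "isCont D1 x" using c1 unfolding D1_def by (simp add: continuous_on_eq_continuous_at)
  then have l1: "(\<lambda>n. D1 (y1 n)) \<longlonglongrightarrow> D1 x" using y1l by (rule isCont_tendsto_compose)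
  have "isCont D2 x" using c2 unfolding D2_def by (simp add: continuous_on_eq_continuous_at)
  then have l2: "(\<lambda>n. D2 (y2 n)) \<longlonglongrightarrow> D2 x" using y2l by (rule isCont_tendsto_compose)
  have "D1 x = D2 x" using l1 l2 unfolding eq by (rule LIMSEQ_unique)
  then show ?thesis unfolding D1_def D2_def .
qed


lemma pd_swap2:
  assumes "Cp p f" "length rest + 2 \<le> p"
  shows "pd (a # b # rest) f = pd (b # a # rest) f"
proof
  fix x
  let ?g = "pd rest f"
  have cd: "\<And>is x. length is < p \<Longrightarrow> pd is f differentiable (at x)"
    and cc: "\<And>is. length is \<le> p \<Longrightarrow> continuous_on UNIV (pd is f)"
    using assms(1) unfolding Cp_def by auto
  have gd: "\<And>y. ?g differentiable (at y)" using cd assms(2) by simp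
  have gud: "\<And>y. (\<lambda>z. frechet_derivative ?g (at z) (axis b 1)) differentiable (at y)"
    using cd[of "b # rest"] assms(2) by simp
  have gvd: "\<And>y. (\<lambda>z. frechet_derivative ?g (at z) (axis a 1)) differentiable (at y)"
    using cd[of "a # rest"] assms(2) by simp
  have c1: "continuous_on UNIV (\<lambda>y. frechet_derivative (\<lambda>z. frechet_derivative ?g (at z) (axis b 1)) (at y) (axis a 1))"
    using cc[of "a # b # rest"] assms(2) by simp
  have c2: "continuous_on UNIV (\<lambda>y. frechet_derivative (\<lambda>z. frechet_derivative ?g (at z) (axis a 1)) (at y) (axis b 1))"
    using cc[of "b # a # rest"] assms(2) by simp
  show "pd (a # b # rest) f x = pd (b # a # rest) f x"
    using schwarz[OF gd gud gvd c1 c2, of x] by simp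
qed

lemma pd_swap:
  assumes "Cp p f" "length (pre @ a # b # rest) \<le> p"
  shows "pd (pre @ a # b # rest) f = pd (pre @ b # a # rest) f"
  using assms(2)
proof (induction pre)
  case Nil then show ?case using pd_swap2[OF assms(1)] by simp
next
  case (Cons c pre)
  then have "pd (pre @ a # b # rest) f = pd (pre @ b # a # rest) f" by simp
  then show ?case by simp
qed

lemma perm_inv:
  assumes "\<And>pre a b rest. length (pre @ a # b # rest) = p \<Longrightarrow> F (pre @ a # b # rest) = F (pre @ b # a # rest)"
    and "mset xs = mset ys" "length xs = p"
  shows "F xs = F ys"
  using assms
proof (induction xs arbitrary: ys F p)
  case Nil then show ?case by simp
next
  case (Cons x xs)
  have "x \<in> set ys" using Cons.prems(2) by (metis list.set_intros(1) set_mset_mset)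
  then obtain ys1 ys2 where ys: "ys = ys1 @ x # ys2" by (meson split_list)
  have lys: "length ys = p" using Cons.prems(2,3) by (metis size_mset)
  note swp = Cons.prems(1)
  have move: "\<And>pre. length (pre @ ys1 @ x # ys2) = p \<Longrightarrow> F (pre @ ys1 @ x # ys2) = F (pre @ x # ys1 @ ys2)"
  proof (induction ys1 arbitrary: pre)
    case Nil then show ?case by simp
  next
    case (Cons c ys1')
    have "F (pre @ (c # ys1') @ x # ys2) = F ((pre @ [c]) @ ys1' @ x # ys2)" by simp
    also have "\<dots> = F ((pre @ [c]) @ x # ys1' @ ys2)" using Cons.IH[of "pre @ [c]"] Cons.prems by simp
    also have "\<dots> = F (pre @ c # x # ys1' @ ys2)" by simp
    also have "\<dots> = F (pre @ x # c # ys1' @ ys2)" using Cons.prems by (intro swp) simp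
    finally show ?case by simp
  qed
  have "F (x # xs) = F (x # ys1 @ ys2)"
  proof (rule Cons.IH[where F="\<lambda>l. F (x # l)" and p="p - 1"])
    show "\<And>pre a b rest. length (pre @ a # b # rest) = p - 1 \<Longrightarrow> F (x # pre @ a # b # rest) = F (x # pre @ b # a # rest)"
      using Cons.prems(1)[where pre="x # pre" for pre] Cons.prems(3) by auto
    show "mset xs = mset (ys1 @ ys2)" using Cons.prems(2) ys by simp
    show "length xs = p - 1" using Cons.prems(3) by simp
  qed
  also have "\<dots> = F ys" using move[of "[]"] lys ys by simp
  finally show ?case .
qed

lemma Dp_sym:
  assumes "Cp p f"
  shows "sym_tensor p (Dp p f y)"
  unfolding sym_tensor_def is_tensor_def
proof (intro conjI allI impI)
  fix "is" js :: "'a list"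
  assume l: "length is = p" and m: "mset is = mset js"
  have "pd is f = pd js f"
    by (rule perm_inv[where F="\<lambda>l. pd l f", OF _ m l]) (use pd_swap[OF assms] in simp)
  moreover have "length js = p" using l m by (metis size_mset)
  ultimately show "Dp p f y is = Dp p f y js" using l unfolding Dp_def by simp
qed (simp add: Dp_def)

lemma Cavg_sym:
  assumes "Cp p f"
  shows "sym_tensor p (Cavg p f x s)"
  unfolding sym_tensor_def is_tensor_def
proof (intro conjI allI impI)
  fix "is" :: "'a list" assume "length is \<noteq> p"
  then show "Cavg p f x s is = 0" unfolding Cavg_def Dp_def by simp
next
  fix "is" js :: "'a list"
  assume l: "length is = p" and m: "mset is = mset js"
  have "Dp p f y is = Dp p f y js" for y
    using Dp_sym[OF assms, of y] l m unfolding sym_tensor_def by blast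
  then show "Cavg p f x s is = Cavg p f x s js" unfolding Cavg_def by simp
qed


lemma Cavg_close:
  assumes Cp: "Cp p f" and L0: "0 \<le> L"
    and lip: "\<And>y z. tnorm2 p (Dp p f y - Dp p f z) \<le> L * norm (y - z)"
    and len: "length is = p"
  shows "\<bar>Cavg p f x s is - Dp p f w is\<bar> \<le> L * (norm (x - w) + norm (x + s - w))"
proof -
  let ?h = "\<lambda>t. pd is f (x + t *\<^sub>R s)"
  have cc: "continuous_on UNIV (pd is f)" using Cp len unfolding Cp_def by auto
  have lc: "continuous_on {0..1} (\<lambda>t::real. x + t *\<^sub>R s)" by (intro continuous_intros)
  have hc: "continuous_on {0..1} ?h"
    by (rule continuous_on_compose2[OF cc lc]) auto
  have hi: "?h integrable_on {0..1}" using hc by (rule integrable_continuous_real)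
  have ci: "(\<lambda>t. pd is f w) integrable_on {0..1::real}"
    by (rule integrable_continuous_real) (rule continuous_on_const)
  have "Cavg p f x s is - Dp p f w is = integral {0..1} ?h - integral {0..1} (\<lambda>t::real. pd is f w)"
    unfolding Cavg_def Dp_def using len by simp
  also have "\<dots> = integral {0..1} (\<lambda>t. ?h t - pd is f w)"
    by (rule integral_diff[OF hi ci, symmetric])
  finally have eq: "Cavg p f x s is - Dp p f w is = integral {0..1} (\<lambda>t. ?h t - pd is f w)" .
  have "norm (integral {0..1} (\<lambda>t. ?h t - pd is f w)) \<le> (L * (norm (x - w) + norm (x + s - w))) * (1 - 0)"
  proof (rule integral_bound)
    show "continuous_on {0..1} (\<lambda>t. ?h t - pd is f w)" using hc by (intro continuous_intros)
  next
    fix t :: real assume t: "t \<in> {0..1}"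
    have "\<bar>?h t - pd is f w\<bar> = \<bar>(Dp p f (x + t *\<^sub>R s) - Dp p f w) is\<bar>"
      unfolding Dp_def using len by simp
    also have "\<dots> \<le> tnorm2 p (Dp p f (x + t *\<^sub>R s) - Dp p f w)" by (rule entry_le_tnorm2[OF len])
    also have "\<dots> \<le> L * norm (x + t *\<^sub>R s - w)" by (rule lip)
    also have "\<dots> \<le> L * (norm (x - w) + norm (x + s - w))"
    proof (rule mult_left_mono[OF _ L0])
      have "x + t *\<^sub>R s - w = (1 - t) *\<^sub>R (x - w) + t *\<^sub>R (x + s - w)" by (simp add: algebra_simps)
      then have "norm (x + t *\<^sub>R s - w) \<le> norm ((1 - t) *\<^sub>R (x - w)) + norm (t *\<^sub>R (x + s - w))"
        by (metis norm_triangle_ineq)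
      also have "\<dots> = (1 - t) * norm (x - w) + t * norm (x + s - w)" using t by simp
      also have "\<dots> \<le> norm (x - w) + norm (x + s - w)"
        using t by (intro add_mono) (auto intro: mult_left_le_one_le)
      finally show "norm (x + t *\<^sub>R s - w) \<le> norm (x - w) + norm (x + s - w)" .
    qed
    finally show "norm (?h t - pd is f w) \<le> L * (norm (x - w) + norm (x + s - w))" by simp
  qed simp
  then show ?thesis unfolding eq by simp
qed



lemma conv_rec0:
  fixes a d e :: "nat \<Rightarrow> real"
  assumes a0: "\<And>k. 0 \<le> a k" and rec: "\<And>k. a (Suc k) \<le> (1 + d k) * a k + e k"
    and d0: "\<And>k. 0 \<le> d k" and e0: "\<And>k. 0 \<le> e k"
    and ds: "summable d" and es: "summable e"
  shows "convergent a"
proof -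
  define B where "B = exp (suminf d) * (a 0 + suminf e)"
  have bnd: "a k \<le> exp (\<Sum>j<k. d j) * (a 0 + (\<Sum>j<k. e j))" for k
  proof (induction k)
    case 0 then show ?case by simp
  next
    case (Suc k)
    let ?S = "\<Sum>j<k. d j" and ?E = "\<Sum>j<k. e j"
    have E0: "0 \<le> a 0 + ?E" using a0 e0 by (simp add: sum_nonneg)
    have "a (Suc k) \<le> (1 + d k) * a k + e k" by (rule rec)
    also have "\<dots> \<le> exp (d k) * (exp ?S * (a 0 + ?E)) + exp (?S + d k) * e k"
    proof (rule add_mono)
      have "(1 + d k) * a k \<le> exp (d k) * a k" using a0 by (intro mult_right_mono exp_ge_add_one_self) auto
      also have "\<dots> \<le> exp (d k) * (exp ?S * (a 0 + ?E))" using Suc by (intro mult_left_mono) auto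
      finally show "(1 + d k) * a k \<le> exp (d k) * (exp ?S * (a 0 + ?E))" .
      have "1 \<le> exp (?S + d k)" using d0 by (simp add: sum_nonneg)
      then show "e k \<le> exp (?S + d k) * e k" using e0[of k] by (simp add: mult_le_cancel_right1)
    qed
    also have "\<dots> = exp (\<Sum>j<Suc k. d j) * (a 0 + (\<Sum>j<Suc k. e j))"
      by (simp add: exp_add algebra_simps)
    finally show ?case .
  qed
  have B: "a k \<le> B" for k
  proof -
    have "(\<Sum>j<k. d j) \<le> suminf d" using ds d0 by (intro sum_le_suminf) auto
    moreover have "(\<Sum>j<k. e j) \<le> suminf e" using es e0 by (intro sum_le_suminf) auto
    ultimately have "exp (\<Sum>j<k. d j) * (a 0 + (\<Sum>j<k. e j)) \<le> B"
      unfolding B_def using a0[of 0] e0 by (intro mult_mono) (auto simp: sum_nonneg)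
    then show ?thesis using bnd[of k] by linarith
  qed
  define c where "c = (\<lambda>k. B * d k + e k)"
  have cs: "summable c" unfolding c_def using ds es by (intro summable_add summable_mult)
  have c0: "0 \<le> c k" for k
  proof -
    have "0 \<le> B" using B[of 0] a0[of 0] by linarith
    then show ?thesis unfolding c_def using d0 e0 by simp
  qed
  define b where "b = (\<lambda>k. a k - (\<Sum>j<k. c j))"
  have dec: "decseq b"
  proof (rule decseq_SucI)
    fix k
    have "d k * a k \<le> d k * B" using B[of k] d0[of k] by (rule mult_left_mono)
    then have "a (Suc k) \<le> a k + c k" using rec[of k] unfolding c_def by (simp add: algebra_simps)
    then show "b (Suc k) \<le> b k" unfolding b_def by simp
  qed
  have low: "\<forall>i. - suminf c \<le> b i"
  proof
    fix i
    have "(\<Sum>j<i. c j) \<le> suminf c" using cs c0 by (intro sum_le_suminf) auto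
    then show "- suminf c \<le> b i" unfolding b_def using a0[of i] by linarith
  qed
  obtain Lb where Lb: "b \<longlonglongrightarrow> Lb" using decseq_convergent[OF dec low] by blast
  have "(\<lambda>k. \<Sum>j<k. c j) \<longlonglongrightarrow> suminf c" using cs by (rule summable_LIMSEQ)
  then have "(\<lambda>k. b k + (\<Sum>j<k. c j)) \<longlonglongrightarrow> Lb + suminf c" using Lb by (intro tendsto_add)
  then have "a \<longlonglongrightarrow> Lb + suminf c" unfolding b_def by simp
  then show ?thesis unfolding convergent_def by blast
qed

lemma conv_rec:
  fixes a d e :: "nat \<Rightarrow> real"
  assumes a0: "\<And>k. 0 \<le> a k" and rec: "\<And>k. N \<le> k \<Longrightarrow> a (Suc k) \<le> (1 + d k) * a k + e k"
    and d0: "\<And>k. 0 \<le> d k" and e0: "\<And>k. 0 \<le> e k"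
    and ds: "summable d" and es: "summable e"
  shows "convergent a"
proof -
  have "convergent (\<lambda>k. a (k + N))"
  proof (rule conv_rec0[where d="\<lambda>k. d (k + N)" and e="\<lambda>k. e (k + N)"])
    show "\<And>k. a (Suc k + N) \<le> (1 + d (k + N)) * a (k + N) + e (k + N)" using rec by simp
  qed (use a0 d0 e0 summable_ignore_initial_segment[OF ds] summable_ignore_initial_segment[OF es] in auto)
  then obtain l where "(\<lambda>k. a (k + N)) \<longlonglongrightarrow> l" unfolding convergent_def by blast
  then have "a \<longlonglongrightarrow> l" by (rule LIMSEQ_offset)
  then show ?thesis unfolding convergent_def by blast
qed



lemma frob_sq: "(frob q T)\<^sup>2 = (\<Sum>is\<in>{is::'n::finite list. length is = q}. (T is)\<^sup>2)"
  unfolding frob_def by (simp add: sum_nonneg)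

lemma pyth_step:
  fixes Ck Ck1 Y :: "'n::finite list \<Rightarrow> real" and A :: "real^'n^'n" and s :: "real^'n"
  assumes symC1: "sym_tensor p Ck1" and symY: "sym_tensor p Y"
    and con: "tapply Ck1 s = tapply Y s"
    and minim: "\<forall>C'. sym_tensor p C' \<and> tapply C' s = tapply Y s \<longrightarrow>
                 frob p (ttransform p (Ck1 - Ck) A) \<le> frob p (ttransform p (C' - Ck) A)"
  shows "(wn p A (Ck - Y))\<^sup>2 = (wn p A (Ck - Ck1))\<^sup>2 + (wn p A (Ck1 - Y))\<^sup>2"
proof -
  define P where "P = ttransform p Ck A"
  define Q where "Q = ttransform p Ck1 A"
  define R where "R = ttransform p Y A"
  let ?L = "{is::'n list. length is = p}"
  have ineq: "(\<Sum>is\<in>?L. (Q is - P is)\<^sup>2) \<le> (\<Sum>is\<in>?L. (Q is - P is + t * (Q is - R is))\<^sup>2)" for t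
  proof -
    define C' where "C' = (\<lambda>is. (1 + t) * Ck1 is + (- t) * Y is)"
    have sC: "sym_tensor p C'" unfolding C'_def by (rule sym_tensor_lin[OF symC1 symY])
    have tC: "tapply C' s = tapply Y s"
      unfolding C'_def tapply_lin con by (simp add: algebra_simps)
    have "frob p (ttransform p (Ck1 - Ck) A) \<le> frob p (ttransform p (C' - Ck) A)"
      using minim sC tC by blast
    moreover have "ttransform p (Ck1 - Ck) A = (\<lambda>is. Q is - P is)"
      unfolding ttransform_diff P_def Q_def by (simp add: fun_diff_def)
    moreover have "ttransform p (C' - Ck) A = (\<lambda>is. Q is - P is + t * (Q is - R is))"
      unfolding ttransform_diff C'_def ttransform_lin P_def Q_def R_def by (simp add: fun_diff_def algebra_simps)
    ultimately have "frob p (\<lambda>is. Q is - P is) \<le> frob p (\<lambda>is. Q is - P is + t * (Q is - R is))" by simp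
    then show ?thesis unfolding frob_def by simp
  qed
  have orth: "(\<Sum>is\<in>?L. (Q is - P is) * (Q is - R is)) = 0"
    by (rule orth_from_min[OF finite_LL ineq])
  have e1: "(wn p A (Ck - Y))\<^sup>2 = (\<Sum>is\<in>?L. (P is - R is)\<^sup>2)"
    unfolding wn_def ttransform_diff frob_sq P_def R_def by (simp add: fun_diff_def)
  have e2: "(wn p A (Ck - Ck1))\<^sup>2 = (\<Sum>is\<in>?L. (Q is - P is)\<^sup>2)"
    unfolding wn_def ttransform_diff frob_sq P_def Q_def by (simp add: fun_diff_def power2_commute)
  have e3: "(wn p A (Ck1 - Y))\<^sup>2 = (\<Sum>is\<in>?L. (Q is - R is)\<^sup>2)"
    unfolding wn_def ttransform_diff frob_sq Q_def R_def by (simp add: fun_diff_def)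
  have "(\<Sum>is\<in>?L. (P is - R is)\<^sup>2) = (\<Sum>is\<in>?L. (Q is - P is)\<^sup>2 + (Q is - R is)\<^sup>2 - 2 * ((Q is - P is) * (Q is - R is)))"
    by (rule sum.cong) (simp_all add: power2_eq_square algebra_simps)
  also have "\<dots> = (\<Sum>is\<in>?L. (Q is - P is)\<^sup>2) + (\<Sum>is\<in>?L. (Q is - R is)\<^sup>2) - 2 * (\<Sum>is\<in>?L. (Q is - P is) * (Q is - R is))"
    by (simp only: sum.distrib sum_subtractf sum_distrib_left)
  finally show ?thesis unfolding e1 e2 e3 orth by simp
qed



theorem mainTheorem9:
  fixes p :: nat
    and f :: "real^'n::finite \<Rightarrow> real"
    and x :: "nat \<Rightarrow> real^'n"
    and W :: "nat \<Rightarrow> real^'n^'n"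
    and C :: "nat \<Rightarrow> 'n tensor"
    and xs :: "real^'n"
    and Ws :: "real^'n^'n"
  assumes p2: "p \<ge> 2"
    and f_Cp: "Cp p f"
    and Dp_lip: "\<exists>L. \<forall>y z. tnorm2 p (Dp p f y - Dp p f z) \<le> L * norm (y - z)"
    and steps: "\<forall>k. x (Suc k) - x k \<noteq> 0"
    and W_inv: "\<forall>k. invertible (W k)"
    and C0: "sym_tensor p (C 0)"
    and C_update: "\<forall>k. sym_tensor p (C (Suc k))
        \<and> tapply (C (Suc k)) (x (Suc k) - x k) = tapply (Cavg p f (x k) (x (Suc k) - x k)) (x (Suc k) - x k)
        \<and> (\<forall>C'. sym_tensor p C'
              \<and> tapply C' (x (Suc k) - x k) = tapply (Cavg p f (x k) (x (Suc k) - x k)) (x (Suc k) - x k)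
              \<longrightarrow> frob p (ttransform p (C (Suc k) - C k) (W k)) \<le> frob p (ttransform p (C' - C k) (W k)))"
    and x_lim: "x \<longlonglongrightarrow> xs"
    and W_lim: "W \<longlonglongrightarrow> Ws"
    and Ws_inv: "invertible Ws"
    and x_sum: "summable (\<lambda>k. norm (x k - xs))"
    and W_sum: "summable (\<lambda>k. onorm (\<lambda>v. (W k - Ws) *v v))"
  shows "(\<lambda>k. frob (p - 1) (tapply (C k - Dp p f xs) (x (Suc k) - x k)) / norm (x (Suc k) - x k))
           \<longlonglongrightarrow> 0"
proof -
  define s where "s = (\<lambda>k. x (Suc k) - x k)"
  define Y where "Y = (\<lambda>k. Cavg p f (x k) (s k))"
  define D where "D = Dp p f xs"
  define N where "N = real (card {is::'n list. length is = p})"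
  have N_nn: "0 \<le> N" unfolding N_def by simp
  obtain L0 where L0: "\<forall>y z. tnorm2 p (Dp p f y - Dp p f z) \<le> L0 * norm (y - z)" using Dp_lip by blast
  define L where "L = max L0 0"
  have L_nn: "0 \<le> L" unfolding L_def by simp
  have lip: "tnorm2 p (Dp p f y - Dp p f z) \<le> L * norm (y - z)" for y z
  proof -
    have "L0 * norm (y - z) \<le> L * norm (y - z)" unfolding L_def by (intro mult_right_mono) auto
    then show ?thesis using L0 by (meson order_trans)
  qed
  have Cu: "sym_tensor p (C (Suc k)) \<and> tapply (C (Suc k)) (s k) = tapply (Y k) (s k) \<and>
      (\<forall>C'. sym_tensor p C' \<and> tapply C' (s k) = tapply (Y k) (s k) \<longrightarrow>
      frob p (ttransform p (C (Suc k) - C k) (W k)) \<le> frob p (ttransform p (C' - C k) (W k)))" for k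
    unfolding s_def Y_def by (rule spec[OF C_update])
  have Csym: "sym_tensor p (C (Suc k))" for k by (rule conjunct1[OF Cu])
  have Ccon: "tapply (C (Suc k)) (s k) = tapply (Y k) (s k)" for k by (rule conjunct1[OF conjunct2[OF Cu]])
  have Cmin: "\<forall>C'. sym_tensor p C' \<and> tapply C' (s k) = tapply (Y k) (s k) \<longrightarrow>
      frob p (ttransform p (C (Suc k) - C k) (W k)) \<le> frob p (ttransform p (C' - C k) (W k))" for k
    by (rule conjunct2[OF conjunct2[OF Cu]])
  have Ysym: "sym_tensor p (Y k)" for k unfolding Y_def by (rule Cavg_sym[OF f_Cp])
  have pyth: "(wn p (W k) (C k - Y k))\<^sup>2 = (wn p (W k) (C k - C (Suc k)))\<^sup>2 + (wn p (W k) (C (Suc k) - Y k))\<^sup>2" for k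
    by (rule pyth_step[OF Csym Ysym Ccon Cmin])

  define \<sigma> where "\<sigma> = (\<lambda>k. frob p (Y k - D))"
  define xe where "xe = (\<lambda>k. norm (x k - xs))"
  have \<sigma>_bnd: "\<sigma> k \<le> sqrt N * (L * (xe k + xe (Suc k)))" for k
  proof -
    have "\<bar>(Y k - D) is\<bar> \<le> L * (xe k + xe (Suc k))" if "length is = p" for "is"
      using Cavg_close[OF f_Cp L_nn lip that, of "x k" "s k" xs] unfolding Y_def D_def xe_def s_def
      by (simp add: fun_diff_def)
    then show ?thesis unfolding \<sigma>_def N_def by (intro frob_const_bound) (auto simp: xe_def L_nn)
  qed
  have \<sigma>_nn: "0 \<le> \<sigma> k" for k unfolding \<sigma>_def by (rule frob_nonneg)
  have xe_s: "summable xe" using x_sum unfolding xe_def .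
  have \<sigma>_s: "summable \<sigma>"
  proof (rule summable_comparison_test'[where N=0])
    show "summable (\<lambda>k. sqrt N * (L * (xe k + xe (Suc k))))"
      using xe_s by (intro summable_mult summable_add) (auto simp: summable_Suc_iff)
    show "norm (\<sigma> k) \<le> sqrt N * (L * (xe k + xe (Suc k)))" for k using \<sigma>_bnd \<sigma>_nn by simp
  qed
  have \<sigma>_0: "\<sigma> \<longlonglongrightarrow> 0" using \<sigma>_s by (rule summable_LIMSEQ_zero)

  obtain Ks where Ks: "Ks > 0" "\<And>T. frob p T \<le> Ks * wn p Ws T" using frob_le_wn[OF Ws_inv, of p] by blast
  define \<epsilon> where "\<epsilon> = (\<lambda>k. onorm (\<lambda>v. (W k - Ws) *v v))"
  have \<epsilon>_nn: "0 \<le> \<epsilon> k" for k unfolding \<epsilon>_def by (rule onorm_pos_le) (rule matrix_vector_mul_bounded_linear)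
  have \<epsilon>_s: "summable \<epsilon>" using W_sum unfolding \<epsilon>_def .
  have \<epsilon>_0: "\<epsilon> \<longlonglongrightarrow> 0" using \<epsilon>_s by (rule summable_LIMSEQ_zero)
  have "convergent \<epsilon>" using \<epsilon>_0 by (rule convergentI)
  then have "Bseq \<epsilon>" by (rule convergent_imp_Bseq)
  then obtain Eb where EbK: "\<forall>n. norm (\<epsilon> n) \<le> Eb" unfolding Bseq_def by blast
  have Eb: "\<epsilon> k \<le> Eb" for k
  proof -
    have "\<bar>\<epsilon> k\<bar> \<le> Eb" using EbK by simp
    then show ?thesis by linarith
  qed
  have Eb_nn: "0 \<le> Eb" using Eb[of 0] \<epsilon>_nn[of 0] by linarith
  define Sw where "Sw = (\<Sum>i\<in>UNIV. \<Sum>j\<in>UNIV. \<bar>Ws $ i $ j\<bar>)"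
  have Ws_ent: "\<bar>Ws $ i $ j\<bar> \<le> Sw" for i j
  proof -
    have "\<bar>Ws $ i $ j\<bar> \<le> (\<Sum>j\<in>UNIV. \<bar>Ws $ i $ j\<bar>)"
      by (rule member_le_sum[of j UNIV "\<lambda>j. \<bar>Ws $ i $ j\<bar>"]) simp_all
    also have "\<dots> \<le> Sw" unfolding Sw_def
      by (rule member_le_sum[of i UNIV "\<lambda>i. \<Sum>j\<in>UNIV. \<bar>Ws $ i $ j\<bar>"]) (auto intro!: sum_nonneg)
    finally show ?thesis .
  qed
  define \<mu> where "\<mu> = 1 + Eb + Sw"
  have Sw_nn: "0 \<le> Sw" using Ws_ent[of undefined undefined] by linarith
  have \<mu>1: "1 \<le> \<mu>" unfolding \<mu>_def using Eb_nn Sw_nn by linarith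
  have Ws\<mu>: "\<bar>Ws $ i $ j\<bar> \<le> \<mu>" for i j using Ws_ent[of i j] Eb_nn unfolding \<mu>_def by linarith
  have Wdiff: "\<bar>W k $ i $ j - Ws $ i $ j\<bar> \<le> \<epsilon> k" for k i j
    using matrix_component_le_onorm[of "W k - Ws" i j] unfolding \<epsilon>_def by simp
  have Wk\<mu>: "\<bar>W k $ i $ j\<bar> \<le> \<mu>" for k i j
    using Wdiff[of k i j] Ws_ent[of i j] Eb[of k] unfolding \<mu>_def by linarith
  define \<beta> where "\<beta> = (\<lambda>k. N * (real p * \<mu>^p * \<epsilon> k) * Ks)"
  have \<beta>_nn: "0 \<le> \<beta> k" for k unfolding \<beta>_def using N_nn \<epsilon>_nn Ks \<mu>1 by simp
  have \<beta>_s: "summable \<beta>" unfolding \<beta>_def using \<epsilon>_s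
    by (intro summable_mult summable_mult2)
  have \<beta>_0: "\<beta> \<longlonglongrightarrow> 0" using \<beta>_s by (rule summable_LIMSEQ_zero)
  have comp: "\<bar>wn p (W k) T - wn p Ws T\<bar> \<le> \<beta> k * wn p Ws T" for k T
  proof -
    have "\<bar>wn p (W k) T - wn p Ws T\<bar> \<le> N * (real p * \<mu>^p * \<epsilon> k) * frob p T"
      unfolding N_def by (rule wn_diff[OF Wk\<mu> Ws\<mu> \<mu>1 Wdiff])
    also have "\<dots> \<le> N * (real p * \<mu>^p * \<epsilon> k) * (Ks * wn p Ws T)"
      using N_nn \<epsilon>_nn[of k] \<mu>1 by (intro mult_left_mono Ks(2)) auto
    finally show ?thesis unfolding \<beta>_def by (simp add: mult.assoc mult.left_commute)
  qed
  have comp1: "wn p (W k) T \<le> (1 + \<beta> k) * wn p Ws T" for k T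
    using comp[of k T] by (simp add: algebra_simps abs_le_iff)
  have comp2: "wn p Ws T \<le> wn p (W k) T + \<beta> k * wn p Ws T" for k T
    using comp[of k T] by (simp add: algebra_simps abs_le_iff)
  define cU where "cU = N * \<mu>^p"
  have upK: "wn p (W k) T \<le> cU * frob p T" for k T
    unfolding cU_def N_def by (rule wn_upper[OF Wk\<mu> \<mu>1])
  define \<rho> where "\<rho> = (\<lambda>k. wn p (W k) (Y k - D))"
  have \<rho>_nn: "0 \<le> \<rho> k" for k unfolding \<rho>_def by (rule wn_nonneg)
  have \<rho>_le: "\<rho> k \<le> cU * \<sigma> k" for k unfolding \<rho>_def \<sigma>_def by (rule upK)
  have \<rho>_s: "summable \<rho>"
  proof (rule summable_comparison_test'[where N=0])
    show "summable (\<lambda>k. cU * \<sigma> k)" using \<sigma>_s by (rule summable_mult)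
    show "norm (\<rho> k) \<le> cU * \<sigma> k" for k using \<rho>_le \<rho>_nn by simp
  qed
  have \<rho>_0: "\<rho> \<longlonglongrightarrow> 0" using \<rho>_s by (rule summable_LIMSEQ_zero)

  define a where "a = (\<lambda>k. wn p Ws (C k - D))"
  define d where "d = (\<lambda>k. wn p (W k) (C k - C (Suc k)))"
  define U where "U = (\<lambda>k. wn p (W k) (C k - Y k))"
  define V where "V = (\<lambda>k. wn p (W k) (C (Suc k) - Y k))"
  have a_nn: "0 \<le> a k" for k unfolding a_def by (rule wn_nonneg)
  have d_nn: "0 \<le> d k" for k unfolding d_def by (rule wn_nonneg)
  have U_nn: "0 \<le> U k" for k unfolding U_def by (rule wn_nonneg)
  have V_nn: "0 \<le> V k" for k unfolding V_def by (rule wn_nonneg)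
  have pyth': "(U k)\<^sup>2 = (d k)\<^sup>2 + (V k)\<^sup>2" for k unfolding U_def d_def V_def by (rule pyth)
  have VU: "V k \<le> U k" for k
  proof -
    have "(V k)\<^sup>2 \<le> (U k)\<^sup>2" using pyth'[of k] by simp
    then show ?thesis using U_nn[of k] by (rule power2_le_imp_le)
  qed
  have U_le: "U k \<le> (1 + \<beta> k) * a k + \<rho> k" for k
  proof -
    have "U k \<le> wn p (W k) (C k - D) + wn p (W k) (D - Y k)" unfolding U_def by (rule wn_tri)
    moreover have "wn p (W k) (D - Y k) = \<rho> k" unfolding \<rho>_def by (rule wn_swap)
    moreover have "wn p (W k) (C k - D) \<le> (1 + \<beta> k) * a k" unfolding a_def by (rule comp1)
    ultimately show ?thesis by linarith
  qed
  have V_ge: "(1 - \<beta> k) * a (Suc k) - \<rho> k \<le> V k" for k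
  proof -
    have "wn p (W k) (C (Suc k) - D) \<le> V k + \<rho> k" unfolding V_def \<rho>_def by (rule wn_tri)
    moreover have "a (Suc k) \<le> wn p (W k) (C (Suc k) - D) + \<beta> k * a (Suc k)" unfolding a_def by (rule comp2)
    ultimately show ?thesis by (simp add: algebra_simps)
  qed
  have rec: "(1 - \<beta> k) * a (Suc k) \<le> (1 + \<beta> k) * a k + 2 * \<rho> k" for k
    using V_ge[of k] VU[of k] U_le[of k] by linarith
  obtain N0 where N0: "\<And>k. N0 \<le> k \<Longrightarrow> \<beta> k \<le> 1/2"
  proof -
    have "eventually (\<lambda>k. \<beta> k < 1/2) sequentially" using \<beta>_0 by (rule order_tendstoD(2)) simp
    then obtain M where "\<forall>k\<ge>M. \<beta> k < 1/2" unfolding eventually_sequentially by blast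
    then show ?thesis using that[of M] by fastforce
  qed
  have rec2: "a (Suc k) \<le> (1 + 4 * \<beta> k) * a k + 4 * \<rho> k" if k: "N0 \<le> k" for k
  proof -
    let ?b = "\<beta> k"
    have b: "?b \<le> 1/2" "0 \<le> ?b" using N0[OF k] \<beta>_nn[of k] by auto
    have id: "(1 - ?b) * ((1 + 4 * ?b) * a k + 4 * \<rho> k) - ((1 + ?b) * a k + 2 * \<rho> k)
      = (1 - 2 * ?b) * (2 * ?b * a k + 2 * \<rho> k)" by (simp add: algebra_simps)
    have "0 \<le> (1 - 2 * ?b) * (2 * ?b * a k + 2 * \<rho> k)"
      using b a_nn[of k] \<rho>_nn[of k] by (intro mult_nonneg_nonneg) auto
    then have "(1 - ?b) * a (Suc k) \<le> (1 - ?b) * ((1 + 4 * ?b) * a k + 4 * \<rho> k)"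
      using id rec[of k] by linarith
    moreover have "0 < 1 - ?b" using b by simp
    ultimately show ?thesis by (simp add: mult_le_cancel_left_pos)
  qed
  have conv: "convergent a"
  proof (rule conv_rec[where N=N0 and d="\<lambda>k. 4 * \<beta> k" and e="\<lambda>k. 4 * \<rho> k"])
    show "\<And>k. N0 \<le> k \<Longrightarrow> a (Suc k) \<le> (1 + 4 * \<beta> k) * a k + 4 * \<rho> k" by (rule rec2)
  qed (use a_nn \<beta>_nn \<rho>_nn summable_mult[OF \<beta>_s, of 4] summable_mult[OF \<rho>_s, of 4] in auto)
  then obtain \<alpha> where \<alpha>: "a \<longlonglongrightarrow> \<alpha>" unfolding convergent_def by blast
  have \<alpha>_nn: "0 \<le> \<alpha>" by (rule LIMSEQ_le_const[OF \<alpha>]) (use a_nn in auto)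
  define u where "u = (\<lambda>k. (1 + \<beta> k) * a k + \<rho> k)"
  define v where "v = (\<lambda>k. (1 - \<beta> k) * a (Suc k) - \<rho> k)"
  have u_l: "u \<longlonglongrightarrow> \<alpha>"
  proof -
    have "(\<lambda>k. (1 + \<beta> k) * a k + \<rho> k) \<longlonglongrightarrow> (1 + 0) * \<alpha> + 0"
      by (intro tendsto_intros \<beta>_0 \<alpha> \<rho>_0)
    then show ?thesis unfolding u_def by simp
  qed
  have v_l: "v \<longlonglongrightarrow> \<alpha>"
  proof -
    have aS: "(\<lambda>k. a (Suc k)) \<longlonglongrightarrow> \<alpha>" using \<alpha> by (rule LIMSEQ_Suc)
    have "(\<lambda>k. (1 - \<beta> k) * a (Suc k) - \<rho> k) \<longlonglongrightarrow> (1 - 0) * \<alpha> - 0"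
      by (intro tendsto_intros \<beta>_0 aS \<rho>_0)
    then show ?thesis unfolding v_def by simp
  qed
  have d2_bnd: "(d k)\<^sup>2 \<le> (u k)\<^sup>2 - (max (v k) 0)\<^sup>2" for k
  proof -
    have "(U k)\<^sup>2 \<le> (u k)\<^sup>2" using U_nn[of k] U_le[of k] unfolding u_def by (intro power_mono) auto
    moreover have "(max (v k) 0)\<^sup>2 \<le> (V k)\<^sup>2"
      using V_ge[of k] V_nn[of k] unfolding v_def by (intro power_mono) auto
    ultimately show ?thesis using pyth'[of k] by linarith
  qed
  have lim2: "(\<lambda>k. (u k)\<^sup>2 - (max (v k) 0)\<^sup>2) \<longlonglongrightarrow> \<alpha>\<^sup>2 - (max \<alpha> 0)\<^sup>2"
    by (intro tendsto_intros tendsto_max u_l v_l)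
  have "\<alpha>\<^sup>2 - (max \<alpha> 0)\<^sup>2 = 0" using \<alpha>_nn by simp
  then have lim2': "(\<lambda>k. (u k)\<^sup>2 - (max (v k) 0)\<^sup>2) \<longlonglongrightarrow> 0" using lim2 by simp
  have d2_0: "(\<lambda>k. (d k)\<^sup>2) \<longlonglongrightarrow> 0"
    by (rule tendsto_sandwich[OF _ _ tendsto_const lim2']) (use d2_bnd in auto)
  have d_0: "d \<longlonglongrightarrow> 0"
  proof -
    have "(\<lambda>k. sqrt ((d k)\<^sup>2)) \<longlonglongrightarrow> sqrt 0" using d2_0 by (rule tendsto_real_sqrt)
    then show ?thesis using d_nn by simp
  qed

  define F where "F = (\<lambda>k. frob (p - 1) (tapply (C k - Dp p f xs) (x (Suc k) - x k)) / norm (x (Suc k) - x k))"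
  have F_eq: "F k = frob (p - 1) (tapply (C k - D) (s k)) / norm (s k)" for k
    unfolding F_def s_def D_def by simp
  have F_nn: "0 \<le> F k" for k unfolding F_eq by (simp add: frob_nonneg)
  have F_bnd: "F k \<le> 2 * Ks * d k + \<sigma> k" if k: "N0 \<le> k" for k
  proof -
    have sn: "0 < norm (s k)" using steps unfolding s_def by simp
    have ta: "tapply (C k - D) (s k) = (\<lambda>is. tapply (C k - C (Suc k)) (s k) is + tapply (Y k - D) (s k) is)"
      using Ccon[of k] unfolding tapply_diff by (simp add: fun_diff_def fun_eq_iff)
    have p1: "Suc (p - 1) = p" using p2 by simp
    have w2: "wn p Ws (C k - C (Suc k)) \<le> 2 * d k"
    proof -
      have "wn p Ws (C k - C (Suc k)) \<le> d k + \<beta> k * wn p Ws (C k - C (Suc k))"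
        unfolding d_def by (rule comp2)
      moreover have "\<beta> k * wn p Ws (C k - C (Suc k)) \<le> 1/2 * wn p Ws (C k - C (Suc k))"
        using N0[OF k] wn_nonneg by (rule mult_right_mono)
      ultimately show ?thesis by linarith
    qed
    have "frob (p - 1) (tapply (C k - D) (s k))
        \<le> frob (p - 1) (tapply (C k - C (Suc k)) (s k)) + frob (p - 1) (tapply (Y k - D) (s k))"
      unfolding ta by (rule frob_triangle)
    also have "\<dots> \<le> norm (s k) * frob p (C k - C (Suc k)) + norm (s k) * \<sigma> k"
      using frob_tapply[of "p - 1" "C k - C (Suc k)" "s k"] frob_tapply[of "p - 1" "Y k - D" "s k"]
      unfolding p1 \<sigma>_def by (intro add_mono) auto
    also have "\<dots> \<le> norm (s k) * (2 * Ks * d k) + norm (s k) * \<sigma> k"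
    proof -
      have "frob p (C k - C (Suc k)) \<le> Ks * wn p Ws (C k - C (Suc k))" by (rule Ks(2))
      also have "\<dots> \<le> Ks * (2 * d k)" using w2 Ks(1) by (intro mult_left_mono) auto
      finally show ?thesis using sn by (intro add_mono mult_left_mono) auto
    qed
    finally have "frob (p - 1) (tapply (C k - D) (s k)) \<le> (2 * Ks * d k + \<sigma> k) * norm (s k)"
      by (simp add: algebra_simps)
    then show ?thesis unfolding F_eq using sn by (simp add: pos_divide_le_eq)
  qed
  have up0: "(\<lambda>k. 2 * Ks * d k + \<sigma> k) \<longlonglongrightarrow> 0"
  proof -
    have "(\<lambda>k. 2 * Ks * d k + \<sigma> k) \<longlonglongrightarrow> 2 * Ks * 0 + 0" by (intro tendsto_intros d_0 \<sigma>_0)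
    then show ?thesis by simp
  qed
  have "F \<longlonglongrightarrow> 0"
  proof (rule tendsto_sandwich[OF _ _ tendsto_const up0])
    show "\<forall>\<^sub>F k in sequentially. 0 \<le> F k" using F_nn by simp
    show "\<forall>\<^sub>F k in sequentially. F k \<le> 2 * Ks * d k + \<sigma> k"
      unfolding eventually_sequentially using F_bnd by blast
  qed
  then show ?thesis unfolding F_def .
qed

end
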